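(* Let $0<a<b$, let $\alpha\in(0,1)$, let $k:[a,b]\to\mathbb{R}$ be a continuous nonnegative map, differentiable at every $t>a$, with $k(t)\neq 0$ and $k'(t)\neq 0$ whenever $t>a$. Let $f:[a,b]\to\mathbb{R}$ be continuous on $[a,b]$, $\alpha$-differentiable at every point of $(a,b)$, and suppose $f(a)=f(b)$. Then there exists $c\in(a,b)$ such that $D^{\alpha}(f)(c)=0$.
   Context: For $k$ as in the claim, $f:[a,b]\to\mathbb{R}$, $\alpha\in(0,1]$ and $t\in(a,b)$, the generalized fractional derivative of $f$ of order $\alpha$ at $t$ is $$D^{\alpha}(f)(t)=f^{(\alpha)}(t):=\lim_{\varepsilon\to 0}\frac{f\left(t-k(t)+k(t)\,e^{\varepsilon\frac{(k(t))^{-\alpha}}{k'(t)}}\right)-f(t)}{\varepsilon},$$ and $f$ is called $\alpha$-differentiable at $t$ if this limit exists. *)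

theory Defs
  imports "HOL-Analysis.Analysis"
begin

definition gfrac_point :: "(real \<Rightarrow> real) \<Rightarrow> (real \<Rightarrow> real) \<Rightarrow> real \<Rightarrow> real \<Rightarrow> real \<Rightarrow> real" where
  "gfrac_point k k' \<alpha> t \<epsilon> = t - k t + k t * exp (\<epsilon> * (k t powr (- \<alpha>)) / k' t)"

definition has_gfrac_deriv ::
  "(real \<Rightarrow> real) \<Rightarrow> (real \<Rightarrow> real) \<Rightarrow> real \<Rightarrow> (real \<Rightarrow> real) \<Rightarrow> real \<Rightarrow> real \<Rightarrow> bool" where
  "has_gfrac_deriv k k' \<alpha> f t D \<longleftrightarrow>
     ((\<lambda>\<epsilon>. (f (gfrac_point k k' \<alpha> t \<epsilon>) - f t) / \<epsilon>) \<longlongrightarrow> D) (at 0)"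

definition gfrac_differentiable ::
  "(real \<Rightarrow> real) \<Rightarrow> (real \<Rightarrow> real) \<Rightarrow> real \<Rightarrow> (real \<Rightarrow> real) \<Rightarrow> real \<Rightarrow> bool" where
  "gfrac_differentiable k k' \<alpha> f t \<longleftrightarrow> (\<exists>D. has_gfrac_deriv k k' \<alpha> f t D)"

definition gfrac_deriv ::
  "(real \<Rightarrow> real) \<Rightarrow> (real \<Rightarrow> real) \<Rightarrow> real \<Rightarrow> (real \<Rightarrow> real) \<Rightarrow> real \<Rightarrow> real" where
  "gfrac_deriv k k' \<alpha> f t = (THE D. has_gfrac_deriv k k' \<alpha> f t D)"

end

theory Submission
  imports Defs
begin

lemma interior_extremum:
  fixes a b :: real and f :: "real \<Rightarrow> real"
  assumes "a < b" "continuous_on {a..b} f" "f a = f b"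
  shows "\<exists>c\<in>{a<..<b}. (\<forall>x\<in>{a..b}. f x \<le> f c) \<or> (\<forall>x\<in>{a..b}. f c \<le> f x)"
proof -
  have ne: "{a..b} \<noteq> {}" using assms by auto
  obtain m where m: "m \<in> {a..b}" "\<forall>x\<in>{a..b}. f x \<le> f m"
    using continuous_attains_sup[OF compact_Icc ne assms(2)] by blast
  obtain n where n: "n \<in> {a..b}" "\<forall>x\<in>{a..b}. f n \<le> f x"
    using continuous_attains_inf[OF compact_Icc ne assms(2)] by blast
  show ?thesis
  proof (cases "m \<in> {a<..<b}")
    case True then show ?thesis using m by blast
  next
    case mF: False
    show ?thesis
    proof (cases "n \<in> {a<..<b}")
      case True then show ?thesis using n by blast
    next
      case False
      have "f m = f a" "f n = f a" using mF False m n assms(3) by auto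
      moreover have "(a+b)/2 \<in> {a..b}" using assms(1) by auto
      ultimately have "\<forall>x\<in>{a..b}. f x \<le> f ((a+b)/2)"
        using m n by (metis order_antisym)
      thus ?thesis using assms(1) by (intro bexI[of _ "(a+b)/2"]) auto
    qed
  qed
qed

theorem mainTheorem4:
  fixes a b \<alpha> :: real and k k' f :: "real \<Rightarrow> real"
  assumes "0 < a" "a < b"
    and "0 < \<alpha>" "\<alpha> < 1"
    and "continuous_on {a..b} k"
    and "\<forall>t\<in>{a..b}. 0 \<le> k t"
    and "\<forall>t\<in>{a<..b}. (k has_real_derivative k' t) (at t within {a..b})"
    and "\<forall>t\<in>{a<..b}. k t \<noteq> 0 \<and> k' t \<noteq> 0"
    and "continuous_on {a..b} f"
    and "\<forall>t\<in>{a<..<b}. gfrac_differentiable k k' \<alpha> f t"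
    and "f a = f b"
  shows "\<exists>c\<in>{a<..<b}. gfrac_deriv k k' \<alpha> f c = 0"
proof -
  obtain c where c: "c \<in> {a<..<b}"
    and ext: "(\<forall>x\<in>{a..b}. f x \<le> f c) \<or> (\<forall>x\<in>{a..b}. f c \<le> f x)"
    using interior_extremum[OF assms(2,9,11)] by blast
  obtain D where D: "has_gfrac_deriv k k' \<alpha> f c D"
    using assms(10) c unfolding gfrac_differentiable_def by blast
  let ?g = "gfrac_point k k' \<alpha> c"
  let ?q = "\<lambda>\<epsilon>. (f (?g \<epsilon>) - f c) / \<epsilon>"
  have lim: "(?q \<longlongrightarrow> D) (at 0)" using D unfolding has_gfrac_deriv_def .
  have gc: "(?g \<longlongrightarrow> ?g 0) (at 0)"
    unfolding gfrac_point_def using assms(8) c by (intro tendsto_intros) auto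
  have g0: "?g 0 = c" unfolding gfrac_point_def by simp
  have ev: "eventually (\<lambda>\<epsilon>. ?g \<epsilon> \<in> {a<..<b}) (at 0)"
    using topological_tendstoD[OF gc, of "{a<..<b}"] c g0 by auto
  have evR: "eventually (\<lambda>\<epsilon>. ?g \<epsilon> \<in> {a..b} \<and> \<epsilon> > 0) (at_right 0)"
    using eventually_conj[OF ev[THEN eventually_at_split[THEN iffD1], THEN conjunct2] eventually_at_right_less]
    by (auto elim!: eventually_mono)
  have evL: "eventually (\<lambda>\<epsilon>. ?g \<epsilon> \<in> {a..b} \<and> \<epsilon> < 0) (at_left 0)"
    using eventually_conj[OF ev[THEN eventually_at_split[THEN iffD1], THEN conjunct1] eventually_at_left_real[where a=0 and b="-1", OF neg_less_0_iff_less[THEN iffD2, OF zero_less_one]]]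
    by (auto elim!: eventually_mono)
  have limR: "(?q \<longlongrightarrow> D) (at_right 0)" using lim filterlim_at_split by blast
  have limL: "(?q \<longlongrightarrow> D) (at_left 0)" using lim filterlim_at_split by blast
  have "D = 0"
    using ext
  proof
    assume mx: "\<forall>x\<in>{a..b}. f x \<le> f c"
    have "D \<le> 0"
      by (rule tendsto_upperbound[OF limR]) (auto intro: eventually_mono[OF evR] simp: mx divide_nonpos_pos)
    moreover have "D \<ge> 0"
      by (rule tendsto_lowerbound[OF limL]) (auto intro: eventually_mono[OF evL] simp: mx divide_nonpos_neg)
    ultimately show ?thesis by simp
  next
    assume mn: "\<forall>x\<in>{a..b}. f c \<le> f x"
    have "D \<ge> 0"
      by (rule tendsto_lowerbound[OF limR]) (auto intro: eventually_mono[OF evR] simp: mn divide_nonneg_pos)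
    moreover have "D \<le> 0"
      by (rule tendsto_upperbound[OF limL]) (auto intro: eventually_mono[OF evL] simp: mn divide_nonneg_neg)
    ultimately show ?thesis by simp
  qed
  have uniq: "\<And>E. has_gfrac_deriv k k' \<alpha> f c E \<Longrightarrow> E = D"
    using lim unfolding has_gfrac_deriv_def using tendsto_unique[OF at_neq_bot] by blast
  have "gfrac_deriv k k' \<alpha> f c = D"
    unfolding gfrac_deriv_def using D uniq by (rule the_equality)
  thus ?thesis using c \<open>D = 0\<close> by blast
qed

end
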